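(* Let $\alpha,\beta,\gamma\in\mathbb{R}$, $c,a\in\mathbb{R}$ with $ca>\max\{\gamma,0\}$, and $r>0$. Let $g(x,y)=c^2a^2-ca\gamma+ca\alpha x^2+3ca\beta y^2-\alpha^2x^2y^2$, $C=\{(x,y)\in\mathbb{R}^2:g(x,y)>0\}$, and $R=\{(x,y):x^2+y^2\le r^2\}$. Then $R\subseteq C$ in each of the following four cases: (1) $\alpha=0$ and $3\beta r^2>\gamma-ca$; (2) $\alpha\neq0$, $\alpha>3\beta$, $r^2\le\frac{ca\alpha-3ca\beta}{\alpha^2}$, and $3\beta r^2>\gamma-ca$; (3) $\alpha\neq0$, $\alpha<3\beta$, $r^2\le\frac{3ca\beta-ca\alpha}{\alpha^2}$, and $\alpha r^2>\gamma-ca$; (4) $3ca\alpha\beta+\alpha^2(ca-\gamma)>0$, $r^2\ge\max\Big\{\frac{ca\alpha-3ca\beta}{\alpha^2},\frac{3ca\beta-ca\alpha}{\alpha^2}\Big\}$, and $$\frac{ca\alpha+3ca\beta-2\sqrt{3c^2a^2\alpha\beta+\alpha^2ca(ca-\gamma)}}{\alpha^2}<r^2<\frac{ca\alpha+3ca\beta+2\sqrt{3c^2a^2\alpha\beta+\alpha^2ca(ca-\gamma)}}{\alpha^2}.$$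
   Context: The set $C$ is the contraction region (for $\omega^2=1$, identical couplings $a_j=b_j=a$) of the virtual system of the all-to-all coupled Rayleigh van der Pol network. *)

theory Defs
  imports Complex_Main
begin

definition gfun :: "real \<Rightarrow> real \<Rightarrow> real \<Rightarrow> real \<Rightarrow> real \<Rightarrow> real \<Rightarrow> real \<Rightarrow> real" where
  "gfun \<alpha> \<beta> \<gamma> c a x y =
     c^2 * a^2 - c * a * \<gamma> + c * a * \<alpha> * x^2 + 3 * c * a * \<beta> * y^2 - \<alpha>^2 * x^2 * y^2"

definition Cset :: "real \<Rightarrow> real \<Rightarrow> real \<Rightarrow> real \<Rightarrow> real \<Rightarrow> (real \<times> real) set" where
  "Cset \<alpha> \<beta> \<gamma> c a = {(x, y). gfun \<alpha> \<beta> \<gamma> c a x y > 0}"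

definition Rset :: "real \<Rightarrow> (real \<times> real) set" where
  "Rset r = {(x, y). x^2 + y^2 \<le> r^2}"

end

theory Submission
  imports Defs
begin

lemma core:
  fixes \<alpha> \<beta> \<gamma> k r X Y :: real
  assumes hk: "k > \<gamma>" "k > 0" and X: "X \<ge> 0" and Y: "Y \<ge> 0" and s: "X + Y \<le> r^2"
    and cases:
      "(\<alpha> = 0 \<and> 3 * \<beta> * r^2 > \<gamma> - k)
     \<or> (\<alpha> \<noteq> 0 \<and> \<alpha> > 3 * \<beta> \<and> r^2 \<le> (k*\<alpha> - 3*k*\<beta>) / \<alpha>^2 \<and> 3 * \<beta> * r^2 > \<gamma> - k)
     \<or> (\<alpha> \<noteq> 0 \<and> \<alpha> < 3 * \<beta> \<and> r^2 \<le> (3*k*\<beta> - k*\<alpha>) / \<alpha>^2 \<and> \<alpha> * r^2 > \<gamma> - k)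
     \<or> (3*k*\<alpha>*\<beta> + \<alpha>^2 * (k - \<gamma>) > 0
        \<and> (k*\<alpha> + 3*k*\<beta> - 2 * sqrt (3*k^2*\<alpha>*\<beta> + \<alpha>^2*k*(k - \<gamma>))) / \<alpha>^2 < r^2
        \<and> r^2 < (k*\<alpha> + 3*k*\<beta> + 2 * sqrt (3*k^2*\<alpha>*\<beta> + \<alpha>^2*k*(k - \<gamma>))) / \<alpha>^2)"
  shows "k^2 - k*\<gamma> + k*\<alpha>*X + 3*k*\<beta>*Y - \<alpha>^2*X*Y > 0"
proof -
  have kg: "k*(k-\<gamma>) > 0" using hk by simp
  have lin: "k*(k-\<gamma>) + 3*k*\<beta>*t > 0" if "0 \<le> t" "t \<le> r^2" "3*\<beta>*r^2 > \<gamma> - k" for t \<beta> :: real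
  proof (cases "\<beta> \<ge> 0")
    case True thus ?thesis using kg that hk by (simp add: add_pos_nonneg)
  next
    case False
    have "3*\<beta>*t \<ge> 3*\<beta>*r^2" using False that by (simp add: mult_left_mono_neg)
    hence "k - \<gamma> + 3*\<beta>*t > 0" using that by linarith
    hence "k*(k - \<gamma> + 3*\<beta>*t) > 0" using hk by simp
    thus ?thesis by (simp add: algebra_simps)
  qed
  consider (c1) "\<alpha> = 0 \<and> 3 * \<beta> * r^2 > \<gamma> - k"
    | (c2) "\<alpha> \<noteq> 0 \<and> \<alpha> > 3 * \<beta> \<and> r^2 \<le> (k*\<alpha> - 3*k*\<beta>) / \<alpha>^2 \<and> 3 * \<beta> * r^2 > \<gamma> - k"
    | (c3) "\<alpha> \<noteq> 0 \<and> \<alpha> < 3 * \<beta> \<and> r^2 \<le> (3*k*\<beta> - k*\<alpha>) / \<alpha>^2 \<and> \<alpha> * r^2 > \<gamma> - k"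
    | (c4) "3*k*\<alpha>*\<beta> + \<alpha>^2 * (k - \<gamma>) > 0
        \<and> (k*\<alpha> + 3*k*\<beta> - 2 * sqrt (3*k^2*\<alpha>*\<beta> + \<alpha>^2*k*(k - \<gamma>))) / \<alpha>^2 < r^2
        \<and> r^2 < (k*\<alpha> + 3*k*\<beta> + 2 * sqrt (3*k^2*\<alpha>*\<beta> + \<alpha>^2*k*(k - \<gamma>))) / \<alpha>^2"
    using cases by blast
  then show ?thesis
  proof cases
    case c1
    have "Y \<le> r^2" using X s by linarith
    hence "k*(k-\<gamma>) + 3*k*\<beta>*Y > 0" using lin[OF Y] c1 by blast
    with c1 show ?thesis by (simp add: power2_eq_square algebra_simps)
  next
    case c2
    have a2: "\<alpha>^2 > 0" using c2 by simp
    have "r^2 \<le> (k*\<alpha> - 3*k*\<beta>) / \<alpha>^2" using c2 by blast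
    hence "r^2 * \<alpha>^2 \<le> k*\<alpha> - 3*k*\<beta>" using a2 by (simp only: pos_le_divide_eq)
    hence r: "\<alpha>^2 * r^2 \<le> k*(\<alpha> - 3*\<beta>)" by (simp add: right_diff_distrib mult.commute mult.left_commute)
    have "\<alpha>^2 * Y \<le> \<alpha>^2 * r^2" using X s a2 by simp
    hence "k*(\<alpha> - 3*\<beta>) - \<alpha>^2*Y \<ge> 0" using r by linarith
    hence e: "X*(k*(\<alpha> - 3*\<beta>) - \<alpha>^2*Y) \<ge> 0" using X by simp
    have "k*(k-\<gamma>) + 3*k*\<beta>*(X+Y) > 0" using lin[of "X+Y" \<beta>] X Y s c2 by simp
    with e show ?thesis by (simp add: power2_eq_square algebra_simps)
  next
    case c3
    have a2: "\<alpha>^2 > 0" using c3 by simp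
    have "r^2 \<le> (3*k*\<beta> - k*\<alpha>) / \<alpha>^2" using c3 by blast
    hence "r^2 * \<alpha>^2 \<le> 3*k*\<beta> - k*\<alpha>" using a2 by (simp only: pos_le_divide_eq)
    hence r: "\<alpha>^2 * r^2 \<le> k*(3*\<beta> - \<alpha>)" by (simp add: right_diff_distrib mult.commute mult.left_commute)
    have "\<alpha>^2 * X \<le> \<alpha>^2 * r^2" using Y s a2 by simp
    hence "k*(3*\<beta> - \<alpha>) - \<alpha>^2*X \<ge> 0" using r by linarith
    hence e: "Y*(k*(3*\<beta> - \<alpha>) - \<alpha>^2*X) \<ge> 0" using Y by simp
    have "k*(k-\<gamma>) + 3*k*(\<alpha>/3)*(X+Y) > 0" using lin[of "X+Y" "\<alpha>/3"] X Y s c3 by simp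
    with e show ?thesis by (simp add: power2_eq_square algebra_simps)
  next
    case c4
    have an: "\<alpha> \<noteq> 0" using c4 by auto
    have a2: "\<alpha>^2 > 0" using an by simp
    define D where "D = 3*k^2*\<alpha>*\<beta> + \<alpha>^2*k*(k - \<gamma>)"
    have De: "D = k*(3*k*\<alpha>*\<beta> + \<alpha>^2*(k-\<gamma>))" unfolding D_def by (simp add: power2_eq_square algebra_simps)
    have Dp: "D > 0" unfolding De using c4 hk by simp
    have lo: "k*\<alpha> + 3*k*\<beta> - 2*sqrt D < \<alpha>^2 * r^2"
      using c4 a2 unfolding D_def by (simp add: field_simps power2_eq_square)
    have hi: "\<alpha>^2 * r^2 < k*\<alpha> + 3*k*\<beta> + 2*sqrt D"
      using c4 a2 unfolding D_def by (simp add: field_simps power2_eq_square)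
    define u where "u = \<alpha>^2*X - 3*k*\<beta>"
    define v where "v = \<alpha>^2*Y - k*\<alpha>"
    have id: "\<alpha>^2 * (k^2 - k*\<gamma> + k*\<alpha>*X + 3*k*\<beta>*Y - \<alpha>^2*X*Y) = D - u*v"
      unfolding u_def v_def D_def by (simp add: power2_eq_square algebra_simps)
    have "u*v < D"
    proof -
      consider "u*v \<le> 0" | "u > 0" "v > 0" | "u < 0" "v < 0"
        by (metis linorder_not_le mult_le_0_iff order_less_imp_le)
      then show ?thesis
      proof cases
        case 1 thus ?thesis using Dp by linarith
      next
        case 2
        have "\<alpha>^2*(X+Y) \<le> \<alpha>^2*r^2" using s a2 by (simp add: mult_left_mono)
        hence "u + v \<le> \<alpha>^2*r^2 - k*\<alpha> - 3*k*\<beta>" unfolding u_def v_def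
          by (simp add: distrib_left)
        hence "u + v < 2*sqrt D" using hi by linarith
        moreover have "u+v > 0" using 2 by simp
        ultimately have "(u+v)^2 < (2*sqrt D)^2"
          by (intro power_strict_mono) auto
        hence "(u+v)^2 < 4*D" using Dp by (simp add: power_mult_distrib)
        moreover have "4*(u*v) \<le> (u+v)^2"
          using sum_squares_ge_zero[of "u-v" 0] by (simp add: power2_eq_square algebra_simps)
        ultimately show ?thesis by linarith
      next
        case 3
        have u1: "u \<ge> -(3*k*\<beta>)" unfolding u_def using X by simp
        have v1: "v \<ge> -(k*\<alpha>)" unfolding v_def using Y by simp
        have "u*v \<le> (-(3*k*\<beta>))*v" using mult_right_mono_neg[OF u1, of v] 3 by simp
        also have "\<dots> \<le> (-(3*k*\<beta>))*(-(k*\<alpha>))"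
        proof -
          have "-(3*k*\<beta>) \<le> 0" using u1 3 by linarith
          thus ?thesis using mult_left_mono_neg[OF v1, of "-(3*k*\<beta>)"] by linarith
        qed
        also have "\<dots> < D"
        proof -
          have "\<alpha>^2*k*(k-\<gamma>) > 0" using a2 hk by simp
          thus ?thesis unfolding D_def by (simp add: power2_eq_square algebra_simps)
        qed
        finally show ?thesis .
      qed
    qed
    hence "\<alpha>^2 * (k^2 - k*\<gamma> + k*\<alpha>*X + 3*k*\<beta>*Y - \<alpha>^2*X*Y) > 0" using id by linarith
    thus ?thesis using a2 by (simp add: zero_less_mult_iff)
  qed
qed

theorem lemma4p7:
  fixes \<alpha> \<beta> \<gamma> c a r :: real
  assumes hca: "c * a > max \<gamma> 0"
    and hr: "r > 0"
    and cases:
      "(\<alpha> = 0 \<and> 3 * \<beta> * r^2 > \<gamma> - c * a)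
     \<or> (\<alpha> \<noteq> 0 \<and> \<alpha> > 3 * \<beta> \<and> r^2 \<le> (c*a*\<alpha> - 3*c*a*\<beta>) / \<alpha>^2 \<and> 3 * \<beta> * r^2 > \<gamma> - c * a)
     \<or> (\<alpha> \<noteq> 0 \<and> \<alpha> < 3 * \<beta> \<and> r^2 \<le> (3*c*a*\<beta> - c*a*\<alpha>) / \<alpha>^2 \<and> \<alpha> * r^2 > \<gamma> - c * a)
     \<or> (3*c*a*\<alpha>*\<beta> + \<alpha>^2 * (c*a - \<gamma>) > 0
        \<and> r^2 \<ge> max ((c*a*\<alpha> - 3*c*a*\<beta>) / \<alpha>^2) ((3*c*a*\<beta> - c*a*\<alpha>) / \<alpha>^2)
        \<and> (c*a*\<alpha> + 3*c*a*\<beta> - 2 * sqrt (3*c^2*a^2*\<alpha>*\<beta> + \<alpha>^2*c*a*(c*a - \<gamma>))) / \<alpha>^2 < r^2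
        \<and> r^2 < (c*a*\<alpha> + 3*c*a*\<beta> + 2 * sqrt (3*c^2*a^2*\<alpha>*\<beta> + \<alpha>^2*c*a*(c*a - \<gamma>))) / \<alpha>^2)"
  shows "Rset r \<subseteq> Cset \<alpha> \<beta> \<gamma> c a"
proof
  fix p assume "p \<in> Rset r"
  then obtain x y where p: "p = (x,y)" and xy: "x^2 + y^2 \<le> r^2" unfolding Rset_def by auto
  define k where "k = c*a"
  have e1: "3*k^2*\<alpha>*\<beta> + \<alpha>^2*k*(k - \<gamma>) = 3*c^2*a^2*\<alpha>*\<beta> + \<alpha>^2*c*a*(c*a - \<gamma>)"
    unfolding k_def by (simp add: power_mult_distrib)
  have cs: "(\<alpha> = 0 \<and> 3 * \<beta> * r^2 > \<gamma> - k)
     \<or> (\<alpha> \<noteq> 0 \<and> \<alpha> > 3 * \<beta> \<and> r^2 \<le> (k*\<alpha> - 3*k*\<beta>) / \<alpha>^2 \<and> 3 * \<beta> * r^2 > \<gamma> - k)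
     \<or> (\<alpha> \<noteq> 0 \<and> \<alpha> < 3 * \<beta> \<and> r^2 \<le> (3*k*\<beta> - k*\<alpha>) / \<alpha>^2 \<and> \<alpha> * r^2 > \<gamma> - k)
     \<or> (3*k*\<alpha>*\<beta> + \<alpha>^2 * (k - \<gamma>) > 0
        \<and> (k*\<alpha> + 3*k*\<beta> - 2 * sqrt (3*k^2*\<alpha>*\<beta> + \<alpha>^2*k*(k - \<gamma>))) / \<alpha>^2 < r^2
        \<and> r^2 < (k*\<alpha> + 3*k*\<beta> + 2 * sqrt (3*k^2*\<alpha>*\<beta> + \<alpha>^2*k*(k - \<gamma>))) / \<alpha>^2)"
  proof -
    have f1: "3*c^2*a^2*\<alpha>*\<beta> + \<alpha>^2*c*a*(c*a - \<gamma>) = 3*(c*a)^2*\<alpha>*\<beta> + \<alpha>^2*(c*a)*(c*a - \<gamma>)"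
      by (simp add: power_mult_distrib mult.assoc)
    have f2: "3*c*a*\<beta> = 3*(c*a)*\<beta>" "3*c*a*\<alpha>*\<beta> = 3*(c*a)*\<alpha>*\<beta>" by (simp_all add: mult.assoc)
    show ?thesis using cases unfolding f1 f2 k_def by blast
  qed
  have "k^2 - k*\<gamma> + k*\<alpha>*x^2 + 3*k*\<beta>*y^2 - \<alpha>^2*x^2*y^2 > 0"
    by (rule core[OF _ _ _ _ xy cs]) (use hca in \<open>auto simp: k_def\<close>)
  thus "p \<in> Cset \<alpha> \<beta> \<gamma> c a" unfolding Cset_def gfun_def p k_def
    by (simp add: power_mult_distrib mult.assoc)
qed

end
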